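(* Let $M$ be a smooth manifold of dimension $n$ and let $\dot x^i=v^i$, $\dot v^i=\Phi^i(x^1,\ldots,x^n,v^1,\ldots,v^n)$ be a Newtonian dynamical system on $M$. In each local chart define $\Gamma^k_{ij}=-\tfrac12\,\partial^2\Phi^k/\partial v^i\partial v^j$. Then $\Gamma^k_{ij}=\Gamma^k_{ji}$, and under every change of local coordinates $\tilde x=\tilde x(x)$ these functions satisfy $$\Gamma^k_{ij}=\sum_{m,a,c}S^k_mT^a_iT^c_j\tilde\Gamma^m_{ac}+\sum_mS^k_m\frac{\partial T^m_i}{\partial x^j},$$ where $S^i_j=\partial x^i/\partial\tilde x^j$, $T^i_j=\partial\tilde x^i/\partial x^j$ and $\tilde\Gamma$ is computed in the new chart at the corresponding point $(\tilde x,\tilde v)$, $\tilde v^i=\sum_jT^i_jv^j$; i.e. they are the components of a symmetric extended affine connection (in $\mathbf v$-representation) canonically associated with the system.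
   Context: A Newtonian dynamical system on $M$ is a smooth vector field on the tangent bundle $TM$ which in the induced coordinates $(x,v)$ reads $\sum_iv^i\partial/\partial x^i+\sum_i\Phi^i(x,v)\partial/\partial v^i$; equivalently, under a change of coordinates the functions $\Phi^i$ transform as $\tilde\Phi^i=\sum_jT^i_j\Phi^j+\sum_{j,k}(\partial T^i_j/\partial x^k)v^jv^k$. *)

theory Defs
  imports "HOL-Analysis.Analysis"
begin

definition dirderiv :: "('a::real_normed_vector \<Rightarrow> 'b::real_normed_vector) \<Rightarrow> 'a \<Rightarrow> 'a \<Rightarrow> 'b" where
  "dirderiv f u p = vector_derivative (\<lambda>t. f (p + t *\<^sub>R u)) (at 0)"

text \<open>C^k on a set S (meant for open S): differentiable with all partial derivatives
  (along the standard basis) of class C^(k-1).\<close>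
fun Ck_on :: "nat \<Rightarrow> 'a::euclidean_space set \<Rightarrow> ('a \<Rightarrow> 'b::real_normed_vector) \<Rightarrow> bool" where
  "Ck_on 0 S f = continuous_on S f"
| "Ck_on (Suc k) S f = (f differentiable_on S \<and> (\<forall>b\<in>Basis. Ck_on k S (\<lambda>p. dirderiv f b p)))"

definition smooth_on :: "'a::euclidean_space set \<Rightarrow> ('a \<Rightarrow> 'b::real_normed_vector) \<Rightarrow> bool" where
  "smooth_on S f = (\<forall>k. Ck_on k S f)"

text \<open>Jacobian matrix T^i_j(x) = d F^i / d x^j of a coordinate change F.\<close>
definition jac :: "(real^'n \<Rightarrow> real^'n) \<Rightarrow> real^'n \<Rightarrow> 'n \<Rightarrow> 'n \<Rightarrow> real" where
  "jac F x i j = dirderiv (\<lambda>y. F y $ i) (axis j 1) x"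

definition matvec :: "('n \<Rightarrow> 'n \<Rightarrow> real) \<Rightarrow> real^'n \<Rightarrow> real^'n" where
  "matvec A v = (\<chi> i. \<Sum>j\<in>UNIV. A i j * v $ j)"

definition Gamma :: "((real^'n) \<times> (real^'n) \<Rightarrow> real^'n) \<Rightarrow> 'n \<Rightarrow> 'n \<Rightarrow> 'n \<Rightarrow> (real^'n) \<times> (real^'n) \<Rightarrow> real" where
  "Gamma Phi k i j p = - (1/2) *
     dirderiv (\<lambda>q. dirderiv (\<lambda>r. Phi r $ k) (0, axis j 1) q) (0, axis i 1) p"

end

theory Submission
  imports Defs
begin


lemma dd_has_derivative:
  assumes "(f has_derivative f') (at p)"
  shows "dirderiv f u p = f' u"
proof -
  have l: "((\<lambda>t::real. p + t *\<^sub>R u) has_derivative (\<lambda>t. t *\<^sub>R u)) (at 0)"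
    by (auto intro!: derivative_eq_intros)
  have "((\<lambda>t::real. f (p + t *\<^sub>R u)) has_derivative (\<lambda>t. f' (t *\<^sub>R u))) (at 0)"
    using has_derivative_compose[OF l, of f f'] assms by simp
  moreover have "(\<lambda>t. f' (t *\<^sub>R u)) = (\<lambda>t. t *\<^sub>R f' u)"
    using assms has_derivative_linear linear_scale by blast
  ultimately have "((\<lambda>t::real. f (p + t *\<^sub>R u)) has_vector_derivative f' u) (at 0)"
    by (simp add: has_vector_derivative_def)
  then show ?thesis by (simp add: dirderiv_def vector_derivative_at)
qed

lemma dd_local:
  assumes "open S" "p \<in> S" "\<And>q. q \<in> S \<Longrightarrow> g q = h q"
  shows "dirderiv g u p = dirderiv h u p"
proof -
  have op: "open ((\<lambda>t::real. p + t *\<^sub>R u) -` S)"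
    by (rule open_vimage[OF assms(1)]) (auto intro!: continuous_intros)
  have "\<And>D. ((\<lambda>t::real. g (p + t *\<^sub>R u)) has_vector_derivative D) (at 0) \<longleftrightarrow>
             ((\<lambda>t::real. h (p + t *\<^sub>R u)) has_vector_derivative D) (at 0)"
  proof
    fix D assume "((\<lambda>t::real. g (p + t *\<^sub>R u)) has_vector_derivative D) (at 0)"
    then show "((\<lambda>t::real. h (p + t *\<^sub>R u)) has_vector_derivative D) (at 0)"
      by (rule has_vector_derivative_transform_within_open[OF _ op]) (auto simp: assms)
  next
    fix D assume "((\<lambda>t::real. h (p + t *\<^sub>R u)) has_vector_derivative D) (at 0)"
    then show "((\<lambda>t::real. g (p + t *\<^sub>R u)) has_vector_derivative D) (at 0)"
      by (rule has_vector_derivative_transform_within_open[OF _ op]) (auto simp: assms)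
  qed
  then show ?thesis by (simp add: dirderiv_def vector_derivative_def)
qed

lemma dd_comp:
  fixes f :: "'a::real_normed_vector \<Rightarrow> real^'m"
  assumes "f differentiable (at p)"
  shows "dirderiv (\<lambda>q. f q $ l) u p = dirderiv f u p $ l"
proof -
  obtain f' where f': "(f has_derivative f') (at p)" using assms by (auto simp: differentiable_def)
  have "((\<lambda>q. f q $ l) has_derivative (\<lambda>h. f' h $ l)) (at p)"
    using bounded_linear.has_derivative[OF bounded_linear_vec_nth f'] by simp
  then show ?thesis using dd_has_derivative f' by metis
qed

lemma dd_slice:
  "dirderiv g (0, u) (x, w) = dirderiv (\<lambda>w'. g (x, w')) u w"
  by (simp add: dirderiv_def)

lemma dd_real_deriv:
  fixes f :: "'a::real_normed_vector \<Rightarrow> real"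
  assumes "f differentiable (at (q + t0 *\<^sub>R u))"
  shows "((\<lambda>t. f (q + t *\<^sub>R u)) has_real_derivative dirderiv f u (q + t0 *\<^sub>R u)) (at t0)"
proof -
  obtain f' where f': "(f has_derivative f') (at (q + t0 *\<^sub>R u))" using assms by (auto simp: differentiable_def)
  have l: "((\<lambda>t::real. q + t *\<^sub>R u) has_derivative (\<lambda>t. t *\<^sub>R u)) (at t0)"
    by (auto intro!: derivative_eq_intros)
  have "((\<lambda>t::real. f (q + t *\<^sub>R u)) has_derivative (\<lambda>t. f' (t *\<^sub>R u))) (at t0)"
    using has_derivative_compose[OF l, of f f'] f' by simp
  moreover have "(\<lambda>t. f' (t *\<^sub>R u)) = (*) (f' u)"
    using f' has_derivative_linear linear_scale by fastforce
  ultimately show ?thesis using dd_has_derivative[OF f', of u]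
    by (simp add: has_field_derivative_def)
qed

lemma delta_mvt:
  fixes f :: "'a::real_normed_vector \<Rightarrow> real"
  assumes sq: "\<And>s t. 0 \<le> s \<Longrightarrow> s \<le> h \<Longrightarrow> 0 \<le> t \<Longrightarrow> t \<le> h \<Longrightarrow> p + s *\<^sub>R u + t *\<^sub>R w \<in> S"
    and df: "\<forall>q\<in>S. f differentiable (at q)"
    and dg: "\<forall>q\<in>S. dirderiv f u differentiable (at q)"
    and h: "0 < h"
  shows "\<exists>\<sigma> \<tau>. 0 < \<sigma> \<and> \<sigma> < h \<and> 0 < \<tau> \<and> \<tau> < h \<and>
    f (p + h *\<^sub>R u + h *\<^sub>R w) - f (p + h *\<^sub>R u) - f (p + h *\<^sub>R w) + f p
      = h * h * dirderiv (dirderiv f u) w (p + \<sigma> *\<^sub>R u + \<tau> *\<^sub>R w)"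
proof -
  define \<phi> where "\<phi> \<sigma> = f ((p + h *\<^sub>R w) + \<sigma> *\<^sub>R u) - f (p + \<sigma> *\<^sub>R u)" for \<sigma>
  have "DERIV \<phi> \<sigma> :> (dirderiv f u ((p + h *\<^sub>R w) + \<sigma> *\<^sub>R u) - dirderiv f u (p + \<sigma> *\<^sub>R u))"
    if "0 \<le> \<sigma>" "\<sigma> \<le> h" for \<sigma>
  proof -
    have "(p + h *\<^sub>R w) + \<sigma> *\<^sub>R u \<in> S"
      using sq[of \<sigma> h] that h by (simp add: algebra_simps)
    moreover have "p + \<sigma> *\<^sub>R u \<in> S"
      using sq[of \<sigma> 0] that h by simp
    ultimately show ?thesis unfolding \<phi>_def
      using df by (auto intro!: derivative_eq_intros dd_real_deriv)
  qed
  from MVT2[OF h this] obtain \<sigma> where s: "0 < \<sigma>" "\<sigma> < h"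
    and e1: "\<phi> h - \<phi> 0 = (h - 0) * (dirderiv f u ((p + h *\<^sub>R w) + \<sigma> *\<^sub>R u) - dirderiv f u (p + \<sigma> *\<^sub>R u))"
    by blast
  define \<psi> where "\<psi> \<tau> = dirderiv f u ((p + \<sigma> *\<^sub>R u) + \<tau> *\<^sub>R w)" for \<tau>
  have "DERIV \<psi> \<tau> :> dirderiv (dirderiv f u) w ((p + \<sigma> *\<^sub>R u) + \<tau> *\<^sub>R w)"
    if "0 \<le> \<tau>" "\<tau> \<le> h" for \<tau>
  proof -
    have "(p + \<sigma> *\<^sub>R u) + \<tau> *\<^sub>R w \<in> S"
      using sq[of \<sigma> \<tau>] that s by simp
    then show ?thesis unfolding \<psi>_def
      using dg by (auto intro!: dd_real_deriv)
  qed
  from MVT2[OF h this] obtain \<tau> where t: "0 < \<tau>" "\<tau> < h"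
    and e2: "\<psi> h - \<psi> 0 = (h - 0) * dirderiv (dirderiv f u) w ((p + \<sigma> *\<^sub>R u) + \<tau> *\<^sub>R w)"
    by blast
  have "\<psi> h = dirderiv f u ((p + h *\<^sub>R w) + \<sigma> *\<^sub>R u)"
    unfolding \<psi>_def by (simp add: algebra_simps)
  moreover have "\<psi> 0 = dirderiv f u (p + \<sigma> *\<^sub>R u)" unfolding \<psi>_def by simp
  ultimately have "\<phi> h - \<phi> 0 = h * h * dirderiv (dirderiv f u) w (p + \<sigma> *\<^sub>R u + \<tau> *\<^sub>R w)"
    using e1 e2 by simp
  moreover have "\<phi> h - \<phi> 0 = f (p + h *\<^sub>R u + h *\<^sub>R w) - f (p + h *\<^sub>R u) - f (p + h *\<^sub>R w) + f p"
    unfolding \<phi>_def by (simp add: algebra_simps)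
  ultimately show ?thesis using s t by metis
qed

lemma clairaut_real:
  fixes f :: "'a::real_normed_vector \<Rightarrow> real"
  assumes S: "open S" "p \<in> S"
    and df: "\<forall>q\<in>S. f differentiable (at q)"
    and du: "\<forall>q\<in>S. dirderiv f u differentiable (at q)"
    and dw: "\<forall>q\<in>S. dirderiv f w differentiable (at q)"
    and cA: "continuous_on S (dirderiv (dirderiv f u) w)"
    and cB: "continuous_on S (dirderiv (dirderiv f w) u)"
  shows "dirderiv (dirderiv f u) w p = dirderiv (dirderiv f w) u p"
proof (rule ccontr)
  define A where "A = dirderiv (dirderiv f u) w"
  define B where "B = dirderiv (dirderiv f w) u"
  assume ne: "dirderiv (dirderiv f u) w p \<noteq> dirderiv (dirderiv f w) u p"
  define e where "e = \<bar>A p - B p\<bar> / 2"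
  have e: "e > 0" using ne by (simp add: e_def A_def B_def)
  have "isCont A p" using cA S continuous_on_eq_continuous_at unfolding A_def by blast
  then obtain d1 where d1: "d1 > 0" "\<And>q. dist q p < d1 \<Longrightarrow> dist (A q) (A p) < e"
    using e unfolding continuous_at_eps_delta by metis
  have "isCont B p" using cB S continuous_on_eq_continuous_at unfolding B_def by blast
  then obtain d2 where d2: "d2 > 0" "\<And>q. dist q p < d2 \<Longrightarrow> dist (B q) (B p) < e"
    using e unfolding continuous_at_eps_delta by metis
  obtain r where r: "r > 0" "ball p r \<subseteq> S" using S openE by metis
  define m where "m = min r (min d1 d2)"
  have m: "m > 0" using r d1 d2 by (simp add: m_def)
  define N where "N = norm u + norm w + 1"
  have Npos: "N > 0" unfolding N_def by (smt (verit) norm_ge_zero)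
  define h where "h = m / (2 * N)"
  have h: "h > 0" unfolding h_def using m Npos by simp
  have hm: "h * (norm u + norm w) < m"
  proof -
    have "h * (norm u + norm w) \<le> h * N" using h by (simp add: N_def)
    also have "\<dots> = m / 2" unfolding h_def using Npos by simp
    finally show ?thesis using m by simp
  qed
  have near: "norm (s *\<^sub>R a + t *\<^sub>R b) < m"
    if "0 \<le> s" "s \<le> h" "0 \<le> t" "t \<le> h" "(a = u \<and> b = w) \<or> (a = w \<and> b = u)" for s t a b
  proof -
    have "norm (s *\<^sub>R a + t *\<^sub>R b) \<le> s * norm a + t * norm b"
      using norm_triangle_ineq[of "s *\<^sub>R a" "t *\<^sub>R b"] that by simp
    also have "\<dots> \<le> h * norm a + h * norm b"
      using that by (intro add_mono mult_right_mono) auto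
    also have "\<dots> = h * (norm u + norm w)" using that by (auto simp: algebra_simps)
    finally show ?thesis using hm by simp
  qed
  have inS: "p + s *\<^sub>R a + t *\<^sub>R b \<in> S"
    if "0 \<le> s" "s \<le> h" "0 \<le> t" "t \<le> h" "(a = u \<and> b = w) \<or> (a = w \<and> b = u)" for s t a b
  proof -
    have "dist (p + s *\<^sub>R a + t *\<^sub>R b) p < r"
      using near[OF that] by (simp add: dist_norm m_def add.assoc)
    then show ?thesis using r by (auto simp: dist_commute)
  qed
  obtain \<sigma> \<tau> where st: "0 < \<sigma>" "\<sigma> < h" "0 < \<tau>" "\<tau> < h" and E1:
    "f (p + h *\<^sub>R u + h *\<^sub>R w) - f (p + h *\<^sub>R u) - f (p + h *\<^sub>R w) + f p
      = h * h * A (p + \<sigma> *\<^sub>R u + \<tau> *\<^sub>R w)"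
    using delta_mvt[of h p u w S f, OF inS df du h] unfolding A_def by auto
  obtain \<sigma>' \<tau>' where st': "0 < \<sigma>'" "\<sigma>' < h" "0 < \<tau>'" "\<tau>' < h" and E2:
    "f (p + h *\<^sub>R w + h *\<^sub>R u) - f (p + h *\<^sub>R w) - f (p + h *\<^sub>R u) + f p
      = h * h * B (p + \<sigma>' *\<^sub>R w + \<tau>' *\<^sub>R u)"
    using delta_mvt[of h p w u S f, OF inS df dw h] unfolding B_def by auto
  have c: "p + h *\<^sub>R w + h *\<^sub>R u = p + h *\<^sub>R u + h *\<^sub>R w" by (simp add: algebra_simps)
  have "h * h * A (p + \<sigma> *\<^sub>R u + \<tau> *\<^sub>R w) = h * h * B (p + \<sigma>' *\<^sub>R w + \<tau>' *\<^sub>R u)"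
    using E1 E2 c by (smt (verit))
  then have "A (p + \<sigma> *\<^sub>R u + \<tau> *\<^sub>R w) = B (p + \<sigma>' *\<^sub>R w + \<tau>' *\<^sub>R u)"
    using h by simp
  moreover have "dist (A (p + \<sigma> *\<^sub>R u + \<tau> *\<^sub>R w)) (A p) < e"
    using d1(2) near[of \<sigma> \<tau> u w] st by (simp add: dist_norm m_def add.assoc)
  moreover have "dist (B (p + \<sigma>' *\<^sub>R w + \<tau>' *\<^sub>R u)) (B p) < e"
    using d2(2) near[of \<sigma>' \<tau>' w u] st' by (simp add: dist_norm m_def add.assoc)
  ultimately have "\<bar>A p - B p\<bar> < 2 * e" by (simp add: dist_real_def)
  then show False by (simp add: e_def)
qed

lemma nth_has_derivative: "((\<lambda>w. w $ a) has_derivative (\<lambda>h. h $ a)) (at w)"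
  by (rule bounded_linear_imp_has_derivative[OF bounded_linear_vec_nth])

lemma diff_nth:
  fixes f :: "'a::real_normed_vector \<Rightarrow> real^'m"
  assumes "f differentiable (at p)"
  shows "(\<lambda>q. f q $ l) differentiable (at p)"
proof -
  obtain f' where f': "(f has_derivative f') (at p)" using assms by (auto simp: differentiable_def)
  show ?thesis using bounded_linear.has_derivative[OF bounded_linear_vec_nth f']
    by (auto simp: differentiable_def)
qed

lemma diff_transform:
  assumes "open S" "q \<in> S" "g differentiable (at q)" "\<And>y. y \<in> S \<Longrightarrow> g y = h y"
  shows "h differentiable (at q)"
proof -
  obtain g' where g': "(g has_derivative g') (at q)" using assms(3) by (auto simp: differentiable_def)
  show ?thesis using has_derivative_transform_within_open[OF g' assms(1,2) assms(4)]
    by (auto simp: differentiable_def)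
qed

lemma clairaut_vec:
  fixes f :: "'a::real_normed_vector \<Rightarrow> real^'m"
  assumes S: "open S" "p \<in> S"
    and df: "f differentiable_on S"
    and du: "dirderiv f u differentiable_on S"
    and dw: "dirderiv f w differentiable_on S"
    and cA: "continuous_on S (dirderiv (dirderiv f u) w)"
    and cB: "continuous_on S (dirderiv (dirderiv f w) u)"
  shows "dirderiv (\<lambda>q. dirderiv (\<lambda>r. f r $ l) u q) w p = dirderiv (\<lambda>q. dirderiv (\<lambda>r. f r $ l) w q) u p"
proof -
  have dfa: "\<forall>q\<in>S. f differentiable (at q)" using df S differentiable_on_eq_differentiable_at by blast
  have dua: "\<forall>q\<in>S. dirderiv f u differentiable (at q)" using du S differentiable_on_eq_differentiable_at by blast
  have dwa: "\<forall>q\<in>S. dirderiv f w differentiable (at q)" using dw S differentiable_on_eq_differentiable_at by blast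
  have eq: "\<And>a q. q \<in> S \<Longrightarrow> dirderiv (\<lambda>r. f r $ l) a q = dirderiv f a q $ l"
    using dfa dd_comp by blast
  have g1: "\<forall>q\<in>S. (\<lambda>r. f r $ l) differentiable (at q)" using dfa diff_nth by blast
  have g2: "\<forall>q\<in>S. dirderiv (\<lambda>r. f r $ l) a differentiable (at q)"
    if "\<forall>q\<in>S. dirderiv f a differentiable (at q)" for a
  proof
    fix q assume q: "q \<in> S"
    have "(\<lambda>q. dirderiv f a q $ l) differentiable (at q)"
      using that q diff_nth by blast
    then show "dirderiv (\<lambda>r. f r $ l) a differentiable (at q)"
      by (rule diff_transform[OF S(1) q]) (simp add: eq)
  qed
  have g3: "continuous_on S (dirderiv (dirderiv (\<lambda>r. f r $ l) a) b)"
    if "\<forall>q\<in>S. dirderiv f a differentiable (at q)" "continuous_on S (dirderiv (dirderiv f a) b)" for a b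
  proof -
    have c: "continuous_on S (\<lambda>q. dirderiv (dirderiv f a) b q $ l)"
      using that(2) by (intro continuous_intros)
    have e1: "dirderiv (dirderiv (\<lambda>r. f r $ l) a) b q = dirderiv (dirderiv f a) b q $ l"
      if q: "q \<in> S" for q
    proof -
      have "dirderiv (dirderiv (\<lambda>r. f r $ l) a) b q = dirderiv (\<lambda>q. dirderiv f a q $ l) b q"
        by (rule dd_local[OF S(1) q]) (simp add: eq)
      also have "\<dots> = dirderiv (dirderiv f a) b q $ l"
        by (rule dd_comp) (use \<open>\<forall>q\<in>S. dirderiv f a differentiable (at q)\<close> q in blast)
      finally show ?thesis .
    qed
    show ?thesis by (rule continuous_on_eq[OF c]) (simp add: e1)
  qed
  show ?thesis
    using clairaut_real[OF S g1 g2[OF dua] g2[OF dwa] g3[OF dua cA] g3[OF dwa cB]] by simp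
qed

lemma dd_sum_lin:
  fixes g :: "'i \<Rightarrow> 'a::real_normed_vector \<Rightarrow> real"
  assumes "finite I" "\<And>c. c \<in> I \<Longrightarrow> g c differentiable (at v)"
  shows "dirderiv (\<lambda>w. \<Sum>c\<in>I. a c * g c w) u v = (\<Sum>c\<in>I. a c * dirderiv (g c) u v)"
proof -
  have "\<forall>c\<in>I. \<exists>g'. (g c has_derivative g') (at v)" using assms(2) by (auto simp: differentiable_def)
  then obtain G where G: "\<And>c. c \<in> I \<Longrightarrow> (g c has_derivative G c) (at v)" by metis
  have "((\<lambda>w. \<Sum>c\<in>I. a c * g c w) has_derivative (\<lambda>h. \<Sum>c\<in>I. a c * G c h)) (at v)"
    by (intro has_derivative_sum has_derivative_mult_right G)
  then have "dirderiv (\<lambda>w. \<Sum>c\<in>I. a c * g c w) u v = (\<Sum>c\<in>I. a c * G c u)"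
    by (rule dd_has_derivative)
  also have "\<dots> = (\<Sum>c\<in>I. a c * dirderiv (g c) u v)"
  proof (rule sum.cong)
    fix c assume c: "c \<in> I"
    show "a c * G c u = a c * dirderiv (g c) u v" using dd_has_derivative[OF G[OF c]] by simp
  qed simp
  finally show ?thesis .
qed

lemma dd_add:
  assumes "g differentiable (at v)" "h differentiable (at v)"
  shows "dirderiv (\<lambda>w. g w + h w) u v = dirderiv g u v + dirderiv h u v"
proof -
  obtain g' where g': "(g has_derivative g') (at v)" using assms by (auto simp: differentiable_def)
  obtain h' where h': "(h has_derivative h') (at v)" using assms by (auto simp: differentiable_def)
  have "((\<lambda>w. g w + h w) has_derivative (\<lambda>x. g' x + h' x)) (at v)"
    by (intro has_derivative_add g' h')
  then show ?thesis using dd_has_derivative[OF \<open>((\<lambda>w. g w + h w) has_derivative (\<lambda>x. g' x + h' x)) (at v)\<close>] dd_has_derivative[OF g'] dd_has_derivative[OF h'] by simp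
qed

lemma matvec_eq: "matvec A w = (\<chi> i j. A i j) *v w"
  by (simp add: matvec_def matrix_vector_mult_def)

lemma sum_delta_mult1: fixes f :: "'a::finite \<Rightarrow> real" shows "(\<Sum>x\<in>UNIV. (f x::real) * (if x = j then 1 else 0)) = f j"
proof -
  have "\<And>x. f x * (if x = j then 1 else 0) = (if x = j then f x else 0)" by simp
  then show ?thesis by (simp add: sum.delta')
qed

lemma sum_delta_mult2: fixes f :: "'a::finite \<Rightarrow> real" shows "(\<Sum>x\<in>UNIV. (f x::real) * (if j = x then 1 else 0)) = f j"
proof -
  have "\<And>x. f x * (if j = x then 1 else 0) = (if j = x then f x else 0)" by simp
  then show ?thesis by (simp add: sum.delta)
qed

lemma matvec_axis: "matvec A (axis j 1) = (\<Sum>c\<in>UNIV. A c j *\<^sub>R axis c 1)"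
  by (simp add: matvec_def vec_eq_iff sum_component axis_def sum_delta_mult1 sum_delta_mult2)

lemma dd_chain_matvec:
  fixes g :: "real^'n \<Rightarrow> real"
  assumes "g differentiable (at (matvec A v))"
  shows "dirderiv (\<lambda>w. g (matvec A w)) (axis j 1) v = (\<Sum>c\<in>UNIV. A c j * dirderiv g (axis c 1) (matvec A v))"
proof -
  obtain g' where g': "(g has_derivative g') (at (matvec A v))" using assms by (auto simp: differentiable_def)
  have lin: "((\<lambda>w. matvec A w) has_derivative (\<lambda>w. matvec A w)) (at v)"
    unfolding matvec_eq by (rule bounded_linear_imp_has_derivative) simp
  have "((\<lambda>w. g (matvec A w)) has_derivative (\<lambda>h. g' (matvec A h))) (at v)"
    using has_derivative_compose[OF lin g'] .
  then have "dirderiv (\<lambda>w. g (matvec A w)) (axis j 1) v = g' (matvec A (axis j 1))"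
    by (rule dd_has_derivative)
  also have "\<dots> = (\<Sum>c\<in>UNIV. A c j * g' (axis c 1))"
    unfolding matvec_axis using has_derivative_linear[OF g']
    by (simp add: linear_sum linear_scale)
  also have "\<dots> = (\<Sum>c\<in>UNIV. A c j * dirderiv g (axis c 1) (matvec A v))"
    using dd_has_derivative[OF g'] by simp
  finally show ?thesis .
qed



lemma slice_diff:
  fixes g :: "'a::real_normed_vector \<times> 'b::real_normed_vector \<Rightarrow> 'c::real_normed_vector"
  assumes "g differentiable (at (x, w))"
  shows "(\<lambda>w. g (x, w)) differentiable (at w)"
proof -
  have "((\<lambda>w. (x, w)) has_derivative (\<lambda>h. (0, h))) (at w)"
    by (auto intro!: derivative_eq_intros)
  then have "(\<lambda>w. (x, w)) differentiable (at w)" by (auto simp: differentiable_def)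
  then show ?thesis by (rule differentiable_compose[of g "\<lambda>w. (x,w)", OF assms])
qed

lemma sum2_axis:
  fixes f :: "'n::finite \<Rightarrow> 'n \<Rightarrow> real"
  shows "(\<Sum>a\<in>UNIV. \<Sum>b\<in>UNIV. f a b * (axis i 1 $ a * axis j 1 $ b)) = f i j"
proof -
  have "\<And>a b. f a b * (axis i (1::real) $ a * axis j 1 $ b) = (if b = j then (if a = i then f a b else 0) else 0)"
    by (simp add: axis_def)
  then show ?thesis by (simp add: sum.delta sum.delta')
qed

lemma swap_lemma:
  fixes H :: "'n::finite \<Rightarrow> 'n \<Rightarrow> real"
  shows "(\<Sum>c\<in>UNIV. P c * (\<Sum>a\<in>UNIV. R a * H a c)) = (\<Sum>a\<in>UNIV. \<Sum>c\<in>UNIV. R a * P c * H a c)"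
proof -
  have "(\<Sum>c\<in>UNIV. P c * (\<Sum>a\<in>UNIV. R a * H a c)) = (\<Sum>c\<in>UNIV. \<Sum>a\<in>UNIV. R a * P c * H a c)"
    by (simp add: sum_distrib_left mult_ac)
  also have "\<dots> = (\<Sum>a\<in>UNIV. \<Sum>c\<in>UNIV. R a * P c * H a c)" by (rule sum.swap)
  finally show ?thesis .
qed

lemma swap_lemma2:
  fixes X :: "'n::finite \<Rightarrow> real"
  shows "(\<Sum>l\<in>UNIV. (\<Sum>m\<in>UNIV. S m * A m l) * X l) = (\<Sum>m\<in>UNIV. S m * (\<Sum>l\<in>UNIV. A m l * X l))"
proof -
  have "(\<Sum>l\<in>UNIV. (\<Sum>m\<in>UNIV. S m * A m l) * X l) = (\<Sum>l\<in>UNIV. \<Sum>m\<in>UNIV. S m * (A m l * X l))"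
    by (simp add: sum_distrib_right sum_distrib_left mult_ac)
  also have "\<dots> = (\<Sum>m\<in>UNIV. \<Sum>l\<in>UNIV. S m * (A m l * X l))" by (rule sum.swap)
  also have "\<dots> = (\<Sum>m\<in>UNIV. S m * (\<Sum>l\<in>UNIV. A m l * X l))" by (simp add: sum_distrib_left)
  finally show ?thesis .
qed

theorem theorem4p1:
  fixes U :: "(real^'n) set"
    and F G :: "real^'n \<Rightarrow> real^'n"
    and Phi Phit :: "(real^'n) \<times> (real^'n) \<Rightarrow> real^'n"
  assumes U_open: "open U"
    and FU_open: "open (F ` U)"
    and F_smooth: "smooth_on U F"
    and G_smooth: "smooth_on (F ` U) G"
    and GF: "\<And>x. x \<in> U \<Longrightarrow> G (F x) = x"
    and FG: "\<And>y. y \<in> F ` U \<Longrightarrow> F (G y) = y"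
    and Phi_smooth: "smooth_on (U \<times> UNIV) Phi"
    and Phit_smooth: "smooth_on (F ` U \<times> UNIV) Phit"
    and transf: "\<And>x v i. x \<in> U \<Longrightarrow>
        Phit (F x, matvec (jac F x) v) $ i =
          (\<Sum>j\<in>UNIV. jac F x i j * Phi (x, v) $ j)
          + (\<Sum>j\<in>UNIV. \<Sum>k\<in>UNIV. dirderiv (\<lambda>y. jac F y i j) (axis k 1) x * v $ j * v $ k)"
  shows "\<forall>x\<in>U. \<forall>v k i j.
     Gamma Phi k i j (x, v) = Gamma Phi k j i (x, v) \<and>
     Gamma Phi k i j (x, v) =
       (\<Sum>m\<in>UNIV. \<Sum>a\<in>UNIV. \<Sum>c\<in>UNIV.
          jac G (F x) k m * jac F x a i * jac F x c j * Gamma Phit m a c (F x, matvec (jac F x) v))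
       + (\<Sum>m\<in>UNIV. jac G (F x) k m * dirderiv (\<lambda>y. jac F y m i) (axis j 1) x)"
proof (intro ballI allI conjI)
  fix x v k i j
  assume x: "x \<in> U"
  have F2: "Ck_on (Suc (Suc 0)) U F" using F_smooth unfolding smooth_on_def by blast
  have P2: "Ck_on (Suc (Suc 0)) (U \<times> UNIV) Phi" using Phi_smooth unfolding smooth_on_def by blast
  have Q2: "Ck_on (Suc (Suc 0)) (F ` U \<times> UNIV) Phit" using Phit_smooth unfolding smooth_on_def by blast
  have G1: "Ck_on (Suc 0) (F ` U) G" using G_smooth unfolding smooth_on_def by blast
  have oP: "open (U \<times> (UNIV::(real^'n) set))" by (simp add: open_Times U_open)
  have oQ: "open (F ` U \<times> (UNIV::(real^'n) set))" by (simp add: open_Times FU_open)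
  have Fx: "F x \<in> F ` U" using x by simp
  have bE: "\<And>c. axis c (1::real) \<in> (Basis :: (real^'n) set)" by simp
  have bZ: "\<And>c. (0::real^'n, axis c (1::real)) \<in> (Basis :: ((real^'n) \<times> (real^'n)) set)"
    by (simp add: Basis_prod_def)
  from F2 have Fd: "F differentiable_on U"
    and Fdb: "\<And>b. b \<in> Basis \<Longrightarrow> dirderiv F b differentiable_on U"
    and Fc: "\<And>b b'. b \<in> Basis \<Longrightarrow> b' \<in> Basis \<Longrightarrow> continuous_on U (dirderiv (dirderiv F b) b')"
    by auto
  from P2 have Pd: "Phi differentiable_on (U \<times> UNIV)"
    and Pdb: "\<And>b. b \<in> Basis \<Longrightarrow> dirderiv Phi b differentiable_on (U \<times> UNIV)"
    and Pc: "\<And>b b'. b \<in> Basis \<Longrightarrow> b' \<in> Basis \<Longrightarrow> continuous_on (U \<times> UNIV) (dirderiv (dirderiv Phi b) b')"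
    by auto
  from Q2 have Qd: "Phit differentiable_on (F ` U \<times> UNIV)"
    and Qdb: "\<And>b. b \<in> Basis \<Longrightarrow> dirderiv Phit b differentiable_on (F ` U \<times> UNIV)"
    by auto
  from G1 have Gd: "G differentiable_on F ` U" by auto
  have Pat: "\<And>w. Phi differentiable (at (x, w))"
    using Pd x unfolding differentiable_on_eq_differentiable_at[OF oP] by auto
  have PDat: "\<And>w b. b \<in> Basis \<Longrightarrow> dirderiv Phi b differentiable (at (x, w))"
    using Pdb x unfolding differentiable_on_eq_differentiable_at[OF oP] by auto
  have Qat: "\<And>w. Phit differentiable (at (F x, w))"
    using Qd Fx unfolding differentiable_on_eq_differentiable_at[OF oQ] by auto
  have QDat: "\<And>w b. b \<in> Basis \<Longrightarrow> dirderiv Phit b differentiable (at (F x, w))"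
    using Qdb Fx unfolding differentiable_on_eq_differentiable_at[OF oQ] by auto
  have Fat: "F differentiable (at x)"
    using Fd x unfolding differentiable_on_eq_differentiable_at[OF U_open] by auto
  have Gat: "G differentiable (at (F x))"
    using Gd Fx unfolding differentiable_on_eq_differentiable_at[OF FU_open] by auto

  show "Gamma Phi k i j (x, v) = Gamma Phi k j i (x, v)"
    using clairaut_vec[OF oP _ Pd Pdb[OF bZ[of j]] Pdb[OF bZ[of i]] Pc[OF bZ[of j] bZ[of i]]
        Pc[OF bZ[of i] bZ[of j]], of "(x, v)" k] x
    unfolding Gamma_def by simp

  define A where "A = jac F x"
  define S where "S = jac G (F x)"
  define \<phi> where "\<phi> = (\<lambda>l w. Phi (x, w) $ l)"
  define \<psi> where "\<psi> = (\<lambda>m w. Phit (F x, w) $ m)"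
  define C where "C = (\<lambda>m a b. dirderiv (\<lambda>y. jac F y m a) (axis b 1) x)"
  define Q where "Q = (\<lambda>m (w::real^'n). \<Sum>a\<in>UNIV. \<Sum>b\<in>UNIV. C m a b * (w $ a * w $ b))"

  have \<phi>d: "\<And>l w. \<phi> l differentiable (at w)"
    unfolding \<phi>_def using diff_nth[OF slice_diff[OF Pat]] by simp
  have \<phi>D: "\<And>l b w. dirderiv (\<phi> l) (axis b 1) w = dirderiv Phi (0, axis b 1) (x, w) $ l"
  proof -
    fix l b w
    have "dirderiv (\<phi> l) (axis b 1) w = dirderiv (\<lambda>r. Phi r $ l) (0, axis b 1) (x, w)"
      unfolding \<phi>_def dd_slice by simp
    also have "\<dots> = dirderiv Phi (0, axis b 1) (x, w) $ l" by (rule dd_comp[OF Pat])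
    finally show "dirderiv (\<phi> l) (axis b 1) w = dirderiv Phi (0, axis b 1) (x, w) $ l" .
  qed
  have \<phi>Dd: "\<And>l b w. dirderiv (\<phi> l) (axis b 1) differentiable (at w)"
  proof -
    fix l b w
    have e: "dirderiv (\<phi> l) (axis b 1) = (\<lambda>w. dirderiv Phi (0, axis b 1) (x, w) $ l)"
      by (rule ext) (rule \<phi>D)
    show "dirderiv (\<phi> l) (axis b 1) differentiable (at w)"
      unfolding e by (rule diff_nth[OF slice_diff[OF PDat[OF bZ]]])
  qed
  have \<phi>H: "\<And>l a b. dirderiv (\<lambda>q. dirderiv (\<lambda>r. Phi r $ l) (0, axis b 1) q) (0, axis a 1) (x, v)
      = dirderiv (dirderiv (\<phi> l) (axis b 1)) (axis a 1) v"
    unfolding \<phi>_def dd_slice by simp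

  have \<psi>d: "\<And>m w. \<psi> m differentiable (at w)"
    unfolding \<psi>_def using diff_nth[OF slice_diff[OF Qat]] by simp
  have \<psi>D: "\<And>m b w. dirderiv (\<psi> m) (axis b 1) w = dirderiv Phit (0, axis b 1) (F x, w) $ m"
  proof -
    fix m b w
    have "dirderiv (\<psi> m) (axis b 1) w = dirderiv (\<lambda>r. Phit r $ m) (0, axis b 1) (F x, w)"
      unfolding \<psi>_def dd_slice by simp
    also have "\<dots> = dirderiv Phit (0, axis b 1) (F x, w) $ m" by (rule dd_comp[OF Qat])
    finally show "dirderiv (\<psi> m) (axis b 1) w = dirderiv Phit (0, axis b 1) (F x, w) $ m" .
  qed
  have \<psi>Dd: "\<And>m b w. dirderiv (\<psi> m) (axis b 1) differentiable (at w)"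
  proof -
    fix m b w
    have e: "dirderiv (\<psi> m) (axis b 1) = (\<lambda>w. dirderiv Phit (0, axis b 1) (F x, w) $ m)"
      by (rule ext) (rule \<psi>D)
    show "dirderiv (\<psi> m) (axis b 1) differentiable (at w)"
      unfolding e by (rule diff_nth[OF slice_diff[OF QDat[OF bZ]]])
  qed
  have \<psi>H: "\<And>m a c y. dirderiv (\<lambda>q. dirderiv (\<lambda>r. Phit r $ m) (0, axis c 1) q) (0, axis a 1) (F x, y)
      = dirderiv (dirderiv (\<psi> m) (axis c 1)) (axis a 1) y"
    unfolding \<psi>_def dd_slice by simp

  have ST: "\<And>k l. (\<Sum>m\<in>UNIV. S k m * A m l) = (if k = l then 1 else 0)"
  proof -
    fix k l
    obtain F' where F': "(F has_derivative F') (at x)" using Fat by (auto simp: differentiable_def)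
    obtain G' where G': "(G has_derivative G') (at (F x))" using Gat by (auto simp: differentiable_def)
    have "((\<lambda>y. G (F y)) has_derivative (\<lambda>h. G' (F' h))) (at x)"
      by (rule has_derivative_compose[OF F' G'])
    then have "((\<lambda>y. y) has_derivative (\<lambda>h. G' (F' h))) (at x)"
      by (rule has_derivative_transform_within_open[OF _ U_open x]) (simp add: GF)
    then have GF': "(\<lambda>h. G' (F' h)) = (\<lambda>h. h)"
      using has_derivative_unique has_derivative_ident by blast
    have jG: "\<And>k m. S k m = G' (axis m 1) $ k"
      unfolding S_def jac_def using dd_comp[OF Gat] dd_has_derivative[OF G'] by simp
    have jF: "\<And>m l. A m l = F' (axis l 1) $ m"
      unfolding A_def jac_def using dd_comp[OF Fat] dd_has_derivative[OF F'] by simp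
    have linG: "linear G'" using G' has_derivative_linear by blast
    have "(\<Sum>m\<in>UNIV. S k m * A m l) = (\<Sum>m\<in>UNIV. F' (axis l 1) $ m * G' (axis m 1) $ k)"
      by (simp add: jG jF mult.commute)
    also have "\<dots> = (\<Sum>m\<in>UNIV. F' (axis l 1) $ m *\<^sub>R G' (axis m 1)) $ k"
      by (simp add: sum_component)
    also have "\<dots> = G' (\<Sum>m\<in>UNIV. F' (axis l 1) $ m *\<^sub>R axis m 1) $ k"
      using linG by (simp add: linear_sum linear_scale)
    also have "(\<Sum>m\<in>UNIV. F' (axis l 1) $ m *\<^sub>R axis m 1) = F' (axis l 1)"
      using basis_expansion[of "F' (axis l 1)"] by (simp add: scalar_mult_eq_scaleR)
    also have "G' (F' (axis l 1)) = axis l 1" using GF' by metis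
    finally show "(\<Sum>m\<in>UNIV. S k m * A m l) = (if k = l then 1 else 0)"
      by (simp add: axis_def)
  qed

  have Csym: "\<And>m a b. C m a b = C m b a"
  proof -
    fix m a b
    show "C m a b = C m b a"
      using clairaut_vec[OF U_open x Fd Fdb[OF bE[of a]] Fdb[OF bE[of b]] Fc[OF bE[of a] bE[of b]]
        Fc[OF bE[of b] bE[of a]], of m]
      unfolding C_def jac_def by simp
  qed

  have rel: "\<And>m w. \<psi> m (matvec A w) = (\<Sum>l\<in>UNIV. A m l * \<phi> l w) + Q m w"
    unfolding \<psi>_def \<phi>_def A_def Q_def C_def using transf[OF x] by (simp add: mult.assoc)

  have QD: "\<And>m w. ((Q m) has_derivative (\<lambda>h. \<Sum>a\<in>UNIV. \<Sum>b\<in>UNIV. C m a b * (w $ a * h $ b + h $ a * w $ b))) (at w)"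
    unfolding Q_def
    by (intro has_derivative_sum has_derivative_mult_right has_derivative_mult nth_has_derivative)
  have QDj: "\<And>m w. dirderiv (Q m) (axis j 1) w
      = (\<Sum>a\<in>UNIV. \<Sum>b\<in>UNIV. C m a b * (w $ a * axis j 1 $ b + axis j 1 $ a * w $ b))"
    by (rule dd_has_derivative[OF QD])
  have QDjD: "\<And>m. ((\<lambda>w. \<Sum>a\<in>UNIV. \<Sum>b\<in>UNIV. C m a b * (w $ a * axis j 1 $ b + axis j 1 $ a * w $ b))
      has_derivative (\<lambda>h. \<Sum>a\<in>UNIV. \<Sum>b\<in>UNIV. C m a b * (h $ a * axis j 1 $ b + axis j 1 $ a * h $ b))) (at v)"
    by (intro has_derivative_sum has_derivative_mult_right has_derivative_add has_derivative_mult_left nth_has_derivative)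
  have QDD: "\<And>m. dirderiv (\<lambda>w. \<Sum>a\<in>UNIV. \<Sum>b\<in>UNIV. C m a b * (w $ a * axis j 1 $ b + axis j 1 $ a * w $ b)) (axis i 1) v
      = C m i j + C m j i"
    using dd_has_derivative[OF QDjD] by (simp add: distrib_left sum.distrib sum2_axis)

  have lin: "\<And>w. (\<lambda>w. matvec A w) differentiable (at w)"
    unfolding matvec_eq by (rule bounded_linear_imp_differentiable) simp

  define Ht where "Ht = (\<lambda>m a c. dirderiv (dirderiv (\<psi> m) (axis c 1)) (axis a 1) (matvec A v))"
  define X where "X = (\<lambda>l. dirderiv (dirderiv (\<phi> l) (axis j 1)) (axis i 1) v)"

  have L: "\<And>m. dirderiv (\<lambda>w. dirderiv (\<lambda>w. \<psi> m (matvec A w)) (axis j 1) w) (axis i 1) v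
      = (\<Sum>c\<in>UNIV. A c j * (\<Sum>a\<in>UNIV. A a i * Ht m a c))"
  proof -
    fix m
    have e1: "(\<lambda>w. dirderiv (\<lambda>w. \<psi> m (matvec A w)) (axis j 1) w)
        = (\<lambda>w. \<Sum>c\<in>UNIV. A c j * dirderiv (\<psi> m) (axis c 1) (matvec A w))"
      by (rule ext) (rule dd_chain_matvec[OF \<psi>d])
    have dc: "\<And>c. c \<in> UNIV \<Longrightarrow> (\<lambda>w. dirderiv (\<psi> m) (axis c 1) (matvec A w)) differentiable (at v)"
      by (rule differentiable_compose[OF \<psi>Dd lin])
    have "dirderiv (\<lambda>w. \<Sum>c\<in>UNIV. A c j * dirderiv (\<psi> m) (axis c 1) (matvec A w)) (axis i 1) v
        = (\<Sum>c\<in>UNIV. A c j * dirderiv (\<lambda>w. dirderiv (\<psi> m) (axis c 1) (matvec A w)) (axis i 1) v)"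
      using dd_sum_lin[where I=UNIV and g="\<lambda>c w. dirderiv (\<psi> m) (axis c 1) (matvec A w)"
          and a="\<lambda>c. A c j" and u="axis i 1" and v=v, OF finite_class.finite_UNIV dc] by simp
    also have "\<dots> = (\<Sum>c\<in>UNIV. A c j * (\<Sum>a\<in>UNIV. A a i * Ht m a c))"
      unfolding Ht_def using dd_chain_matvec[OF \<psi>Dd] by simp
    finally show "dirderiv (\<lambda>w. dirderiv (\<lambda>w. \<psi> m (matvec A w)) (axis j 1) w) (axis i 1) v
      = (\<Sum>c\<in>UNIV. A c j * (\<Sum>a\<in>UNIV. A a i * Ht m a c))" unfolding e1 .
  qed

  have R: "\<And>m. dirderiv (\<lambda>w. dirderiv (\<lambda>w. \<psi> m (matvec A w)) (axis j 1) w) (axis i 1) v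
      = (\<Sum>l\<in>UNIV. A m l * X l) + (C m i j + C m j i)"
  proof -
    fix m
    have fe: "(\<lambda>w. \<psi> m (matvec A w)) = (\<lambda>w. (\<Sum>l\<in>UNIV. A m l * \<phi> l w) + Q m w)"
      by (rule ext) (rule rel)
    have dsum: "\<And>w. (\<lambda>w. \<Sum>l\<in>UNIV. A m l * \<phi> l w) differentiable (at w)"
      using \<phi>d by (auto intro!: differentiable_sum differentiable_mult)
    have dQ: "\<And>w. Q m differentiable (at w)" using QD by (auto simp: differentiable_def)
    have e2: "(\<lambda>w. dirderiv (\<lambda>w. (\<Sum>l\<in>UNIV. A m l * \<phi> l w) + Q m w) (axis j 1) w)
        = (\<lambda>w. (\<Sum>l\<in>UNIV. A m l * dirderiv (\<phi> l) (axis j 1) w)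
             + (\<Sum>a\<in>UNIV. \<Sum>b\<in>UNIV. C m a b * (w $ a * axis j 1 $ b + axis j 1 $ a * w $ b)))"
    proof (rule ext)
      fix w
      have "dirderiv (\<lambda>w. (\<Sum>l\<in>UNIV. A m l * \<phi> l w) + Q m w) (axis j 1) w
          = dirderiv (\<lambda>w. \<Sum>l\<in>UNIV. A m l * \<phi> l w) (axis j 1) w + dirderiv (Q m) (axis j 1) w"
        using dd_add[OF dsum dQ] by simp
      also have "dirderiv (\<lambda>w. \<Sum>l\<in>UNIV. A m l * \<phi> l w) (axis j 1) w
          = (\<Sum>l\<in>UNIV. A m l * dirderiv (\<phi> l) (axis j 1) w)"
        using dd_sum_lin[where I=UNIV and g=\<phi> and a="\<lambda>l. A m l" and u="axis j 1" and v=w, OF finite_class.finite_UNIV \<phi>d]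
        by simp
      finally show "dirderiv (\<lambda>w. (\<Sum>l\<in>UNIV. A m l * \<phi> l w) + Q m w) (axis j 1) w
        = (\<Sum>l\<in>UNIV. A m l * dirderiv (\<phi> l) (axis j 1) w)
             + (\<Sum>a\<in>UNIV. \<Sum>b\<in>UNIV. C m a b * (w $ a * axis j 1 $ b + axis j 1 $ a * w $ b))"
        using QDj by simp
    qed
    have d1: "(\<lambda>w. \<Sum>l\<in>UNIV. A m l * dirderiv (\<phi> l) (axis j 1) w) differentiable (at v)"
      using \<phi>Dd by (auto intro!: differentiable_sum differentiable_mult)
    have d2: "(\<lambda>w. \<Sum>a\<in>UNIV. \<Sum>b\<in>UNIV. C m a b * (w $ a * axis j 1 $ b + axis j 1 $ a * w $ b)) differentiable (at v)"
      using QDjD by (auto simp: differentiable_def)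
    have "dirderiv (\<lambda>w. (\<Sum>l\<in>UNIV. A m l * dirderiv (\<phi> l) (axis j 1) w)
             + (\<Sum>a\<in>UNIV. \<Sum>b\<in>UNIV. C m a b * (w $ a * axis j 1 $ b + axis j 1 $ a * w $ b))) (axis i 1) v
        = dirderiv (\<lambda>w. \<Sum>l\<in>UNIV. A m l * dirderiv (\<phi> l) (axis j 1) w) (axis i 1) v
          + (C m i j + C m j i)"
      using dd_add[OF d1 d2] QDD by simp
    also have "dirderiv (\<lambda>w. \<Sum>l\<in>UNIV. A m l * dirderiv (\<phi> l) (axis j 1) w) (axis i 1) v
        = (\<Sum>l\<in>UNIV. A m l * X l)"
      unfolding X_def
      using dd_sum_lin[where I=UNIV and g="\<lambda>l. dirderiv (\<phi> l) (axis j 1)" and a="\<lambda>l. A m l"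
          and u="axis i 1" and v=v, OF finite_class.finite_UNIV \<phi>Dd] by simp
    finally show "dirderiv (\<lambda>w. dirderiv (\<lambda>w. \<psi> m (matvec A w)) (axis j 1) w) (axis i 1) v
      = (\<Sum>l\<in>UNIV. A m l * X l) + (C m i j + C m j i)"
      unfolding fe e2 .
  qed

  define Y where "Y = (\<lambda>m. \<Sum>a\<in>UNIV. \<Sum>c\<in>UNIV. A a i * A c j * Ht m a c)"
  have E: "\<And>m. (\<Sum>l\<in>UNIV. A m l * X l) = Y m - 2 * C m i j"
    using L R Csym unfolding Y_def swap_lemma by (smt (verit))
  have Xk: "X k = (\<Sum>m\<in>UNIV. S k m * (Y m - 2 * C m i j))"
  proof -
    have "X k = (\<Sum>l\<in>UNIV. X l * (if k = l then 1 else 0))" by (rule sum_delta_mult2[symmetric])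
    also have "\<dots> = (\<Sum>l\<in>UNIV. (\<Sum>m\<in>UNIV. S k m * A m l) * X l)" by (rule sum.cong) (simp_all add: ST)
    also have "\<dots> = (\<Sum>m\<in>UNIV. S k m * (\<Sum>l\<in>UNIV. A m l * X l))" by (rule swap_lemma2)
    finally show ?thesis by (simp add: E)
  qed
  have GL: "Gamma Phi k i j (x, v) = - (1/2) * X k"
    unfolding Gamma_def X_def using \<phi>H by simp
  have GR: "\<And>m a c. Gamma Phit m a c (F x, matvec A v) = - (1/2) * Ht m a c"
    unfolding Gamma_def Ht_def using \<psi>H by simp
  have inner: "\<And>m. (\<Sum>a\<in>UNIV. \<Sum>c\<in>UNIV. S k m * A a i * A c j * (- (1/2) * Ht m a c)) = - (1/2) * (S k m * Y m)"
    unfolding Y_def by (simp add: sum_distrib_left mult_ac)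
  have "Gamma Phi k i j (x, v) =
       (\<Sum>m\<in>UNIV. \<Sum>a\<in>UNIV. \<Sum>c\<in>UNIV. S k m * A a i * A c j * Gamma Phit m a c (F x, matvec A v))
       + (\<Sum>m\<in>UNIV. S k m * C m i j)"
    unfolding GL GR inner Xk
    by (simp add: sum_distrib_left sum_subtractf sum_negf algebra_simps)
  then show "Gamma Phi k i j (x, v) =
       (\<Sum>m\<in>UNIV. \<Sum>a\<in>UNIV. \<Sum>c\<in>UNIV.
          jac G (F x) k m * jac F x a i * jac F x c j * Gamma Phit m a c (F x, matvec (jac F x) v))
       + (\<Sum>m\<in>UNIV. jac G (F x) k m * dirderiv (\<lambda>y. jac F y m i) (axis j 1) x)"
    unfolding S_def A_def C_def by simp
qed

end
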